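(* Let $\lambda>0$, $d_v>0$, $\epsilon\ge0$, $m=\lambda\pi d_v^2$, let $k\ge0$ and let $\mathbf r_{\mathbf x}=(r_1,\dots,r_k)\in\mathbb R^k$ be a given range vector. Then the conditional localizability probability is $$P_{\rm C,Loc}=1-\mathbb P\big[\Delta_p(\mathbf R_{\mathbf 0},\mathbf r_{\mathbf x})\le\epsilon\big]=1-\frac{m^k}{k!}e^{-m}\prod_{i=1}^k\mathbb P\big[|R_i-r_i|\le\epsilon\ \big|\ N_{\mathbf 0}=k\big],$$ where, on the event $N_{\mathbf 0}=k$, $\mathbf R_{\mathbf 0}=(R_1,\dots,R_k)$.
   Context: Landmarks are the points of a homogeneous Poisson point process $\Phi_{\mathbf 0}$ of intensity $\lambda$ on $\mathbb R^2$. A landmark is visible from the origin $\mathbf 0$ if its Euclidean distance to $\mathbf 0$ is at most $d_v$; $N_{\mathbf 0}$ is the number of visible landmarks. The random range vector $\mathbf R_{\mathbf 0}\in\mathbb R^{N_{\mathbf 0}}$ lists the distances from $\mathbf 0$ to the visible landmarks, ordered clockwise by bearing starting from a fixed reference direction ("true north"). For real vectors, $\Delta_p(\mathbf u,\mathbf v)=\|\mathbf u-\mathbf v\|_\infty$ if $\dim\mathbf u=\dim\mathbf v$ (equal to $0$ when both are empty) and $\Delta_p(\mathbf u,\mathbf v)=\infty$ otherwise. (In the paper $\mathbf r_{\mathbf x}$ is the realized range vector at another location $\mathbf x$, whose landmarks are independent of $\Phi_{\mathbf 0}$; an empty product equals $1$.) *)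

theory Defs
  imports "HOL-Probability.Probability"
begin

text \<open>Landmarks are points of the plane, identified with complex numbers
  (real part = east coordinate, imaginary part = north coordinate).\<close>

text \<open>Bearing measured clockwise from true north (the positive imaginary
  axis), with values in [0, 2 pi).\<close>
definition bearing :: "complex \<Rightarrow> real" where
  "bearing z = Arg2pi (\<i> * cnj z)"

text \<open>Sample space for the landmarks visible from the origin: the number of
  landmarks N in the disk of radius dv is Poisson(lambda pi dv^2), and
  independently the landmark positions are an i.i.d. sequence of uniform points
  in the disk; the visible landmarks are the first N of them.  This is the
  standard construction of a homogeneous Poisson point process of intensity
  lambda restricted to the closed disk cball 0 dv.\<close>
definition landmark_space :: "real \<Rightarrow> real \<Rightarrow> (nat \<times> (nat \<Rightarrow> complex)) measure" where
  "landmark_space lam dv =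
     measure_pmf (poisson_pmf (lam * pi * dv\<^sup>2)) \<Otimes>\<^sub>M
     (\<Pi>\<^sub>M i\<in>(UNIV::nat set). uniform_measure lborel (cball (0::complex) dv))"

definition num_visible :: "nat \<times> (nat \<Rightarrow> complex) \<Rightarrow> nat" where
  "num_visible \<omega> = fst \<omega>"

definition range_vector :: "nat \<times> (nat \<Rightarrow> complex) \<Rightarrow> real list" where
  "range_vector \<omega> = map norm (sort_key bearing (map (snd \<omega>) [0..<fst \<omega>]))"

definition delta_p :: "real list \<Rightarrow> real list \<Rightarrow> ereal" where
  "delta_p u v = (if length u = length v
      then ereal (Max (insert 0 {\<bar>u ! i - v ! i\<bar> | i. i < length u}))
      else \<infinity>)"

end

theory Submission
  imports Defs "HOL-Analysis.Analysis"
begin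

lemma borel_measurable_Arg2pi[measurable]: "Arg2pi \<in> borel_measurable borel"
  unfolding borel_measurable_iff_le
  using closed_Arg2pi2pi_le by (auto intro: borel_closed)

lemma borel_measurable_bearing[measurable]: "bearing \<in> borel_measurable borel"
proof -
  have "cnj \<in> borel_measurable (borel::complex measure)"
    by (intro borel_measurable_continuous_onI continuous_intros)
  then show ?thesis unfolding bearing_def[abs_def] by measurable
qed

lemma bearing_scale: "c > 0 \<Longrightarrow> bearing (c *\<^sub>R z) = bearing z"
proof -
  assume c: "c > 0"
  have "\<i> * cnj (c *\<^sub>R z) = (\<i> * cnj z) * of_real c"
    by (simp add: scaleR_conv_of_real)
  then show ?thesis using c by (simp add: bearing_def)
qed

definition U :: "real \<Rightarrow> complex measure" where
  "U dv = uniform_measure lborel (cball 0 dv)"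

lemma space_U[simp]: "space (U dv) = UNIV" by (simp add: U_def)
lemma sets_U[simp, measurable_cong]: "sets (U dv) = sets borel" by (simp add: U_def)

lemma emeasure_cball_pos: "dv > 0 \<Longrightarrow> emeasure lborel (cball (0::complex) dv) \<noteq> 0"
proof -
  assume "dv > 0"
  have "emeasure lborel (cball (0::complex) dv) = ennreal (unit_ball_vol (DIM(complex)) * dv ^ DIM(complex))"
    using \<open>dv > 0\<close> by (intro emeasure_cball) simp
  moreover have "unit_ball_vol (DIM(complex)) * dv ^ DIM(complex) > 0"
    using \<open>dv > 0\<close> by (intro mult_pos_pos unit_ball_vol_pos) auto
  ultimately show ?thesis by simp (metis mult_eq_0_iff power_zero_numeral less_irrefl)
qed

lemma prob_space_U: "dv > 0 \<Longrightarrow> prob_space (U dv)"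
  unfolding U_def
  by (intro prob_space_uniform_measure emeasure_cball_pos) (use emeasure_lborel_cball_finite[of "0::complex" dv] in auto)

lemma scale_lborel:
  fixes c :: real and B :: "real set"
  assumes c: "c > 0" and B: "B \<in> sets borel"
  shows "emeasure lborel {z::complex. norm z \<le> c * dv \<and> bearing z \<in> B}
       = ennreal (c^2) * emeasure lborel {z::complex. norm z \<le> dv \<and> bearing z \<in> B}"
proof -
  have m: "{z::complex. norm z \<le> c * dv \<and> bearing z \<in> B} \<in> sets borel" using B by measurable
  have "emeasure lborel {z::complex. norm z \<le> c * dv \<and> bearing z \<in> B} =
      emeasure (density (distr lborel borel (\<lambda>x::complex. 0 + c *\<^sub>R x)) (\<lambda>_. \<bar>c\<bar>^DIM(complex)))
        {z::complex. norm z \<le> c * dv \<and> bearing z \<in> B}"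
    using lborel_affine[of c "0::complex"] c by simp
  also have "\<dots> = ennreal (c^2) * emeasure (distr lborel borel (\<lambda>x::complex. c *\<^sub>R x))
        {z::complex. norm z \<le> c * dv \<and> bearing z \<in> B}"
    using m c by (simp add: emeasure_density nn_integral_cmult_indicator)
  also have "\<dots> = ennreal (c^2) * emeasure lborel ((\<lambda>x::complex. c *\<^sub>R x) -` {z::complex. norm z \<le> c * dv \<and> bearing z \<in> B})"
    using m by (subst emeasure_distr) auto
  also have "(\<lambda>x::complex. c *\<^sub>R x) -` {z::complex. norm z \<le> c * dv \<and> bearing z \<in> B}
      = {z::complex. norm z \<le> dv \<and> bearing z \<in> B}"
    using c by (auto simp: bearing_scale)
  finally show ?thesis .
qed

lemma measure_U:
  assumes dv: "dv > 0" and S: "S \<in> sets borel"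
  shows "measure (U dv) S = measure lborel (cball 0 dv \<inter> S) / measure lborel (cball (0::complex) dv)"
proof -
  have f1: "emeasure lborel (cball (0::complex) dv) \<noteq> top"
    using emeasure_lborel_cball_finite[of "0::complex" dv] by auto
  have f2: "emeasure lborel (cball (0::complex) dv \<inter> S) \<noteq> top"
  proof -
    have "emeasure lborel (cball (0::complex) dv \<inter> S) \<le> emeasure lborel (cball (0::complex) dv)"
      by (rule emeasure_mono) auto
    then show ?thesis using f1 by (metis neq_top_trans)
  qed
  have pos: "measure lborel (cball (0::complex) dv) > 0"
    using emeasure_cball_pos[OF dv] f1 emeasure_eq_ennreal_measure[OF f1]
    by (metis ennreal_0 measure_nonneg order_le_less)
  have "measure (U dv) S = enn2real (emeasure lborel (cball 0 dv \<inter> S) / emeasure lborel (cball (0::complex) dv))"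
    unfolding U_def measure_def[of "uniform_measure _ _"] using S by simp
  also have "\<dots> = measure lborel (cball 0 dv \<inter> S) / measure lborel (cball (0::complex) dv)"
    unfolding emeasure_eq_ennreal_measure[OF f1] emeasure_eq_ennreal_measure[OF f2]
    by (subst divide_ennreal[OF measure_nonneg pos]) (rule enn2real_ennreal, simp add: pos less_imp_le)
  finally show ?thesis .
qed

definition gfun :: "real \<Rightarrow> real \<Rightarrow> real" where
  "gfun dv a = (if a \<le> 0 then 0 else (min a dv / dv)^2)"

lemma measure_sector:
  assumes dv: "dv > 0" and B: "B \<in> sets borel"
  shows "measure lborel (cball 0 dv \<inter> {z::complex. norm z \<le> a \<and> bearing z \<in> B})
       = gfun dv a * measure lborel {z::complex. norm z \<le> dv \<and> bearing z \<in> B}"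
proof (cases "a \<le> 0")
  case True
  then have "cball 0 dv \<inter> {z::complex. norm z \<le> a \<and> bearing z \<in> B} \<subseteq> {0}"
    by auto (metis norm_le_zero_iff order_trans)
  then have "countable (cball 0 dv \<inter> {z::complex. norm z \<le> a \<and> bearing z \<in> B})"
    by (rule countable_subset) simp
  then have "emeasure lborel (cball 0 dv \<inter> {z::complex. norm z \<le> a \<and> bearing z \<in> B}) = 0"
    by (rule emeasure_lborel_countable)
  then show ?thesis using True by (simp add: gfun_def measure_def)
next
  case False
  define c where "c = min a dv / dv"
  have c: "c > 0" using False dv by (simp add: c_def)
  have eq: "cball 0 dv \<inter> {z::complex. norm z \<le> a \<and> bearing z \<in> B} = {z. norm z \<le> c * dv \<and> bearing z \<in> B}"
    using dv by (auto simp: c_def)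
  have "emeasure lborel {z::complex. norm z \<le> c * dv \<and> bearing z \<in> B}
       = ennreal (c^2) * emeasure lborel {z::complex. norm z \<le> dv \<and> bearing z \<in> B}"
    by (rule scale_lborel[OF c B])
  then have "measure lborel {z::complex. norm z \<le> c * dv \<and> bearing z \<in> B}
       = c^2 * measure lborel {z::complex. norm z \<le> dv \<and> bearing z \<in> B}"
    unfolding measure_def by (simp add: enn2real_mult)
  moreover have "gfun dv a = c^2" using False by (simp add: gfun_def c_def)
  ultimately show ?thesis by (subst eq) (simp only:)
qed

lemma U_cdf_indep:
  assumes dv: "dv > 0" and B: "B \<in> sets borel"
  shows "measure (U dv) {z. norm z \<le> a \<and> bearing z \<in> B}
       = measure (U dv) {z. norm z \<le> a} * measure (U dv) {z. bearing z \<in> B}"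
proof -
  have m1: "{z::complex. norm z \<le> a \<and> bearing z \<in> B} \<in> sets borel" using B by measurable
  have m2: "{z::complex. norm z \<le> a} \<in> sets borel" by measurable
  have m3: "{z::complex. bearing z \<in> B} \<in> sets borel" using B by measurable
  have c1: "cball 0 dv \<inter> {z::complex. norm z \<le> a} = cball 0 dv \<inter> {z::complex. norm z \<le> a \<and> bearing z \<in> UNIV}"
    by auto
  have c2: "cball 0 dv \<inter> {z::complex. bearing z \<in> B} = cball 0 dv \<inter> {z::complex. norm z \<le> dv \<and> bearing z \<in> B}"
    by auto
  have c3: "{z::complex. norm z \<le> dv \<and> bearing z \<in> UNIV} = cball 0 dv" by auto
  have g: "gfun dv dv = 1" using dv by (simp add: gfun_def)
  have u: "UNIV \<in> sets (borel::real measure)" by simp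
  have f1: "emeasure lborel (cball (0::complex) dv) \<noteq> top"
    using emeasure_lborel_cball_finite[of "0::complex" dv] by auto
  have pos: "measure lborel (cball (0::complex) dv) > 0"
    using emeasure_cball_pos[OF dv] f1 emeasure_eq_ennreal_measure[OF f1]
    by (metis ennreal_0 measure_nonneg order_le_less)
  show ?thesis
    unfolding measure_U[OF dv m1] measure_U[OF dv m2] measure_U[OF dv m3] c1 c2
    unfolding measure_sector[OF dv B] measure_sector[OF dv u] c3 g
    using pos by (simp only: mult_1 divide_self_if) simp
qed

definition Rm :: "real \<Rightarrow> real measure" where "Rm dv = distr (U dv) borel norm"
definition Tm :: "real \<Rightarrow> real measure" where "Tm dv = distr (U dv) borel bearing"

lemma prob_space_Rm: "dv > 0 \<Longrightarrow> prob_space (Rm dv)"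
  unfolding Rm_def by (intro prob_space.prob_space_distr prob_space_U) auto
lemma prob_space_Tm: "dv > 0 \<Longrightarrow> prob_space (Tm dv)"
  unfolding Tm_def by (intro prob_space.prob_space_distr prob_space_U) auto
lemma sets_Rm[simp, measurable_cong]: "sets (Rm dv) = sets borel" by (simp add: Rm_def)
lemma sets_Tm[simp, measurable_cong]: "sets (Tm dv) = sets borel" by (simp add: Tm_def)

lemma sets_nb: "A \<in> sets borel \<Longrightarrow> B \<in> sets borel \<Longrightarrow> {z::complex. norm z \<in> A \<and> bearing z \<in> B} \<in> sets borel"
proof -
  assume A: "A \<in> sets borel" and B: "B \<in> sets borel"
  have "norm -` A \<inter> space borel \<in> sets (borel::complex measure)" by (rule measurable_sets[OF borel_measurable_norm A])
  moreover have "bearing -` B \<inter> space borel \<in> sets (borel::complex measure)" by (rule measurable_sets[OF borel_measurable_bearing B])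
  ultimately have "(norm -` A \<inter> space borel) \<inter> (bearing -` B \<inter> space borel) \<in> sets (borel::complex measure)" by blast
  moreover have "(norm -` A \<inter> space borel) \<inter> (bearing -` B \<inter> space borel) = {z::complex. norm z \<in> A \<and> bearing z \<in> B}" by auto
  ultimately show ?thesis by simp
qed

lemma U_indep:
  assumes dv: "dv > 0" and A: "A \<in> sets borel" and B: "B \<in> sets borel"
  shows "measure (U dv) {z. norm z \<in> A \<and> bearing z \<in> B}
       = measure (U dv) {z. norm z \<in> A} * measure (U dv) {z. bearing z \<in> B}"
proof -
  interpret P: prob_space "U dv" using prob_space_U[OF dv] .
  define th where "th = measure (U dv) {z. bearing z \<in> B}"
  have th: "th \<ge> 0" by (simp add: th_def)
  define M1 where "M1 = distr (density (U dv) (indicator {z. bearing z \<in> B})) borel norm"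
  define M2 where "M2 = density (distr (U dv) borel norm) (\<lambda>_. ennreal th)"
  have e1: "emeasure M1 X = emeasure (U dv) {z. norm z \<in> X \<and> bearing z \<in> B}" if X: "X \<in> sets borel" for X
  proof -
    have "emeasure M1 X = emeasure (density (U dv) (indicator {z. bearing z \<in> B})) (norm -` X)"
      unfolding M1_def using X by (subst emeasure_distr) auto
    also have "\<dots> = (\<integral>\<^sup>+ x. indicator {z. bearing z \<in> B} x * indicator (norm -` X) x \<partial>U dv)"
    proof -
      have "norm -` X \<inter> space borel \<in> sets (borel::complex measure)" by (rule measurable_sets[OF borel_measurable_norm X])
      then show ?thesis using X B by (subst emeasure_density) auto
    qed
    also have "\<dots> = (\<integral>\<^sup>+ x. indicator {z. norm z \<in> X \<and> bearing z \<in> B} x \<partial>U dv)"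
      by (intro nn_integral_cong) (auto split: split_indicator)
    also have "\<dots> = emeasure (U dv) {z. norm z \<in> X \<and> bearing z \<in> B}"
      by (intro nn_integral_indicator, subst sets_U, rule sets_nb[OF X B])
    finally show ?thesis .
  qed
  have e2: "emeasure M2 X = ennreal th * emeasure (U dv) {z. norm z \<in> X}" if X: "X \<in> sets borel" for X
  proof -
    have "emeasure M2 X = ennreal th * emeasure (distr (U dv) borel norm) X"
      unfolding M2_def using X by (simp add: emeasure_density nn_integral_cmult_indicator)
    also have "\<dots> = ennreal th * emeasure (U dv) {z. norm z \<in> X}"
      using X by (subst emeasure_distr) (auto simp: vimage_def)
    finally show ?thesis .
  qed
  have s1: "sets M1 = sets borel" by (simp add: M1_def)
  have s2: "sets M2 = sets borel" by (simp add: M2_def)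
  have fin1: "finite_borel_measure M1"
  proof -
    have "emeasure M1 (space M1) \<noteq> \<infinity>"
      using e1[of UNIV] s1 by (simp add: sets_eq_imp_space_eq[OF s1] P.emeasure_eq_measure)
    then show ?thesis using s1 by (intro finite_borel_measure.intro finite_measureI) (auto simp: finite_borel_measure_axioms_def)
  qed
  have fin2: "finite_borel_measure M2"
  proof -
    have "emeasure M2 (space M2) \<noteq> \<infinity>"
      using e2[of UNIV] s2 by (simp add: sets_eq_imp_space_eq[OF s2] P.emeasure_eq_measure ennreal_mult_eq_top_iff)
    then show ?thesis using s2 by (intro finite_borel_measure.intro finite_measureI) (auto simp: finite_borel_measure_axioms_def)
  qed
  have "cdf M1 = cdf M2"
  proof
    fix a
    have "cdf M1 a = enn2real (emeasure M1 {..a})" by (simp add: cdf_def measure_def)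
    also have "\<dots> = measure (U dv) {z. norm z \<le> a \<and> bearing z \<in> B}"
      using e1[of "{..a}"] by (simp add: measure_def)
    also have "\<dots> = th * measure (U dv) {z. norm z \<le> a}"
      using U_cdf_indep[OF dv B] by (simp add: th_def)
    also have "\<dots> = enn2real (emeasure M2 {..a})"
      using e2[of "{..a}"] th by (simp add: enn2real_mult measure_def)
    also have "\<dots> = cdf M2 a" by (simp add: cdf_def measure_def)
    finally show "cdf M1 a = cdf M2 a" .
  qed
  then have "M1 = M2" using cdf_unique'[OF fin1 fin2] by simp
  then have "emeasure M1 A = emeasure M2 A" by simp
  then have "enn2real (emeasure (U dv) {z. norm z \<in> A \<and> bearing z \<in> B}) = enn2real (ennreal th * emeasure (U dv) {z. norm z \<in> A})"
    using e1[OF A] e2[OF A] by simp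
  then have "measure (U dv) {z. norm z \<in> A \<and> bearing z \<in> B} = enn2real (ennreal th) * measure (U dv) {z. norm z \<in> A}"
    unfolding enn2real_mult measure_def .
  then show ?thesis using th unfolding th_def by (simp add: mult.commute)
qed

lemma insort_key_cong: "(\<forall>x\<in>insert a (set L). f x = g x) \<Longrightarrow> insort_key f a L = insort_key g a L"
  by (induction L) auto

lemma sort_key_cong: "(\<forall>x\<in>set xs. f x = g x) \<Longrightarrow> sort_key f xs = sort_key g xs"
proof (induction xs)
  case Nil then show ?case by simp
next
  case (Cons a xs)
  then have "sort_key f xs = sort_key g xs" by simp
  moreover have "\<forall>x\<in>insert a (set (sort_key g xs)). f x = g x" using Cons.prems by simp
  ultimately show ?case by (simp add: insort_key_cong)
qed

lemma insort_key_map: "insort_key f (g a) (map g L) = map g (insort_key (f \<circ> g) a L)"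
  by (induction L) auto

lemma sort_key_map: "sort_key f (map g xs) = map g (sort_key (f \<circ> g) xs)"
  by (induction xs) (auto simp: insort_key_map comp_def)

lemma measurable_insort_key:
  fixes f :: "'b \<Rightarrow> nat \<Rightarrow> real"
  assumes f: "\<And>i. (\<lambda>y. f y i) \<in> borel_measurable N"
  shows "(\<lambda>y. insort_key (f y) a L) \<in> measurable N (count_space UNIV)"
proof (induction L)
  case Nil then show ?case by simp
next
  case (Cons b L)
  have p: "Measurable.pred N (\<lambda>y. f y a \<le> f y b)" using borel_measurable_le[OF f[of a] f[of b]] by (simp add: pred_def)
  have m1: "(\<lambda>y. a # b # L) \<in> measurable N (count_space UNIV)" by simp
  have m2: "(\<lambda>y. b # insort_key (f y) a L) \<in> measurable N (count_space UNIV)"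
    using measurable_compose[OF Cons.IH measurable_count_space[where f="(#) b" and A=UNIV]] by simp
  have "(\<lambda>y. if f y a \<le> f y b then a # b # L else b # insort_key (f y) a L) \<in> measurable N (count_space UNIV)"
    using m1 m2 p[unfolded pred_def] by (rule measurable_If)
  then show ?case by simp
qed

lemma measurable_sort_key:
  fixes f :: "'b \<Rightarrow> nat \<Rightarrow> real"
  assumes f: "\<And>i. (\<lambda>y. f y i) \<in> borel_measurable N"
  shows "(\<lambda>y. sort_key (f y) xs) \<in> measurable N (count_space UNIV)"
proof (induction xs)
  case Nil then show ?case by simp
next
  case (Cons a xs)
  have "(\<lambda>y. insort_key (f y) a (sort_key (f y) xs)) \<in> measurable N (count_space UNIV)"
    by (rule measurable_compose_countable[OF measurable_insort_key[OF f] Cons.IH])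
  then show ?case by simp
qed

lemma sort_perm:
  fixes h :: "nat \<Rightarrow> real"
  shows "distinct (sort_key h [0..<k])" "set (sort_key h [0..<k]) = {..<k}" "length (sort_key h [0..<k]) = k"
    "bij_betw (\<lambda>i. sort_key h [0..<k] ! i) {..<k} {..<k}"
proof -
  show d: "distinct (sort_key h [0..<k])" "set (sort_key h [0..<k]) = {..<k}" "length (sort_key h [0..<k]) = k" by auto
  show "bij_betw (\<lambda>i. sort_key h [0..<k] ! i) {..<k} {..<k}"
    using bij_betw_nth[OF d(1)] d by simp
qed

lemma prod_split2:
  fixes f :: "nat \<Rightarrow> 'a::comm_monoid_mult"
  shows "(\<Prod>i<2*k. f i) = (\<Prod>i<k. f i) * (\<Prod>i<k. f (i+k))"
proof -
  have e: "{..<2*k} = {..<k} \<union> (\<lambda>i. i+k) ` {..<k}"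
  proof (auto)
    fix x assume "x < 2*k" "x \<notin> (\<lambda>i. i+k) ` {..<k}"
    then show "x < k" by (metis add.commute image_eqI le_add_diff_inverse lessThan_iff mult_2 not_le nat_add_left_cancel_less)
  qed
  have "(\<Prod>i<2*k. f i) = (\<Prod>i<k. f i) * prod f ((\<lambda>i. i+k) ` {..<k})"
    unfolding e by (rule prod.union_disjoint) auto
  also have "prod f ((\<lambda>i. i+k) ` {..<k}) = (\<Prod>i<k. f (i+k))"
    by (subst prod.reindex) (auto simp: inj_on_def)
  finally show ?thesis .
qed

definition Mx :: "real \<Rightarrow> nat \<Rightarrow> nat \<Rightarrow> real measure" where
  "Mx dv k i = (if i < k then Tm dv else Rm dv)"

definition W :: "nat \<Rightarrow> (nat \<Rightarrow> complex) \<Rightarrow> nat \<Rightarrow> real" where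
  "W k x = (\<lambda>i\<in>{..<2*k}. if i < k then bearing (x i) else norm (x (i - k)))"

lemma pps_U: "dv > 0 \<Longrightarrow> product_prob_space (\<lambda>_. U dv)"
  by (simp add: product_prob_space_def product_prob_space_axioms_def product_sigma_finite_def
      prob_space_U prob_space_imp_sigma_finite)

lemma pps_Mx: "dv > 0 \<Longrightarrow> product_prob_space (Mx dv k)"
  by (simp add: product_prob_space_def product_prob_space_axioms_def product_sigma_finite_def
      prob_space_Rm prob_space_Tm prob_space_imp_sigma_finite Mx_def)

lemma sets_Mx[simp]: "sets (Mx dv k i) = sets borel" by (simp add: Mx_def)

lemma meas_bearing_U: "bearing \<in> measurable (U dv) (Tm dv)"
  using borel_measurable_bearing by (subst measurable_cong_sets[OF sets_U sets_Tm])
lemma meas_norm_U: "norm \<in> measurable (U dv) (Rm dv)"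
  using borel_measurable_norm by (subst measurable_cong_sets[OF sets_U sets_Rm])

lemma W_meas: "W k \<in> measurable (PiM {..<k} (\<lambda>_. U dv)) (PiM {..<2*k} (Mx dv k))"
  unfolding W_def
proof (rule measurable_restrict)
  fix i assume i: "i \<in> {..<2*k}"
  show "(\<lambda>x. if i < k then bearing (x i) else norm (x (i - k))) \<in> measurable (PiM {..<k} (\<lambda>_. U dv)) (Mx dv k i)"
  proof (cases "i < k")
    case True
    then show ?thesis
      using measurable_compose[OF measurable_component_singleton[of i "{..<k}" "\<lambda>_. U dv"] meas_bearing_U]
      by (simp add: Mx_def)
  next
    case False
    then have "i - k \<in> {..<k}" using i by auto
    then show ?thesis
      using False measurable_compose[OF measurable_component_singleton[of "i - k" "{..<k}" "\<lambda>_. U dv"] meas_norm_U]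
      by (simp add: Mx_def)
  qed
qed

lemma emeasure_Tm: "dv > 0 \<Longrightarrow> A \<in> sets borel \<Longrightarrow> emeasure (Tm dv) A = ennreal (measure (U dv) {z. bearing z \<in> A})"
proof -
  assume dv: "dv > 0" and A: "A \<in> sets borel"
  interpret P: prob_space "U dv" using prob_space_U[OF dv] .
  have "emeasure (Tm dv) A = emeasure (U dv) (bearing -` A \<inter> space (U dv))"
    unfolding Tm_def using A by (subst emeasure_distr) auto
  also have "bearing -` A \<inter> space (U dv) = {z. bearing z \<in> A}" by auto
  finally show ?thesis by (simp add: P.emeasure_eq_measure)
qed

lemma emeasure_Rm: "dv > 0 \<Longrightarrow> A \<in> sets borel \<Longrightarrow> emeasure (Rm dv) A = ennreal (measure (U dv) {z. norm z \<in> A})"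
proof -
  assume dv: "dv > 0" and A: "A \<in> sets borel"
  interpret P: prob_space "U dv" using prob_space_U[OF dv] .
  have "emeasure (Rm dv) A = emeasure (U dv) (norm -` A \<inter> space (U dv))"
    unfolding Rm_def using A by (subst emeasure_distr) auto
  also have "norm -` A \<inter> space (U dv) = {z. norm z \<in> A}" by auto
  finally show ?thesis by (simp add: P.emeasure_eq_measure)
qed

lemma distr_W:
  assumes dv: "dv > 0"
  shows "distr (PiM {..<k} (\<lambda>_. U dv)) (PiM {..<2*k} (Mx dv k)) (W k) = PiM {..<2*k} (Mx dv k)"
proof -
  interpret PM: product_prob_space "Mx dv k" "{..<2*k}" using pps_Mx[OF dv] by (simp add: product_prob_space_def)
  interpret PU: product_prob_space "\<lambda>_. U dv" "{..<k}" using pps_U[OF dv] by (simp add: product_prob_space_def)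
  interpret Q: prob_space "U dv" using prob_space_U[OF dv] .
  show ?thesis
  proof (rule PM.PiM_eqI)
    fix A assume A: "\<And>i. i \<in> {..<2*k} \<Longrightarrow> A i \<in> sets (Mx dv k i)"
    have A': "A i \<in> sets borel" if "i < 2*k" for i using A[of i] that by simp
    have pre: "W k -` PiE {..<2*k} A \<inter> space (PiM {..<k} (\<lambda>_. U dv))
        = PiE {..<k} (\<lambda>j. {z. norm z \<in> A (j+k) \<and> bearing z \<in> A j})"
    proof -
      have "(\<forall>i<2*k. (if i < k then bearing (x i) else norm (x (i - k))) \<in> A i)
          \<longleftrightarrow> (\<forall>j<k. norm (x j) \<in> A (j+k) \<and> bearing (x j) \<in> A j)" for x
      proof
        assume L: "\<forall>i<2*k. (if i < k then bearing (x i) else norm (x (i - k))) \<in> A i"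
        show "\<forall>j<k. norm (x j) \<in> A (j+k) \<and> bearing (x j) \<in> A j"
        proof (intro allI impI conjI)
          fix j assume j: "j < k"
          show "norm (x j) \<in> A (j+k)" using L[rule_format, of "j+k"] j by simp
          show "bearing (x j) \<in> A j" using L[rule_format, of j] j by simp
        qed
      next
        assume R: "\<forall>j<k. norm (x j) \<in> A (j+k) \<and> bearing (x j) \<in> A j"
        show "\<forall>i<2*k. (if i < k then bearing (x i) else norm (x (i - k))) \<in> A i"
        proof (intro allI impI)
          fix i assume i: "i < 2*k"
          show "(if i < k then bearing (x i) else norm (x (i - k))) \<in> A i"
          proof (cases "i < k")
            case True then show ?thesis using R by simp
          next
            case False
            then have "i - k < k" "i - k + k = i" using i by auto
            then show ?thesis using R[rule_format, of "i - k"] False by simp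
          qed
        qed
      qed
      note eqv = this
      show ?thesis
      proof (intro set_eqI)
        fix x
        have l: "x \<in> W k -` PiE {..<2*k} A \<inter> space (PiM {..<k} (\<lambda>_. U dv)) \<longleftrightarrow>
            x \<in> extensional {..<k} \<and> (\<forall>i<2*k. (if i < k then bearing (x i) else norm (x (i - k))) \<in> A i)"
          by (auto simp: W_def space_PiM PiE_iff)
        have r: "x \<in> PiE {..<k} (\<lambda>j. {z. norm z \<in> A (j+k) \<and> bearing z \<in> A j}) \<longleftrightarrow>
            x \<in> extensional {..<k} \<and> (\<forall>j<k. norm (x j) \<in> A (j+k) \<and> bearing (x j) \<in> A j)"
          by (auto simp: PiE_iff)
        show "x \<in> W k -` PiE {..<2*k} A \<inter> space (PiM {..<k} (\<lambda>_. U dv)) \<longleftrightarrow>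
            x \<in> PiE {..<k} (\<lambda>j. {z. norm z \<in> A (j+k) \<and> bearing z \<in> A j})"
          unfolding l r eqv ..
      qed
    qed
    have "emeasure (distr (PiM {..<k} (\<lambda>_. U dv)) (PiM {..<2*k} (Mx dv k)) (W k)) (PiE {..<2*k} A)
        = emeasure (PiM {..<k} (\<lambda>_. U dv)) (W k -` PiE {..<2*k} A \<inter> space (PiM {..<k} (\<lambda>_. U dv)))"
      using A by (intro emeasure_distr W_meas sets_PiM_I_finite) auto
    also have "\<dots> = (\<Prod>j<k. emeasure (U dv) {z. norm z \<in> A (j+k) \<and> bearing z \<in> A j})"
      unfolding pre using A' by (intro PU.emeasure_PiM) (auto intro!: sets_nb)
    also have "\<dots> = (\<Prod>j<k. ennreal (measure (U dv) {z. bearing z \<in> A j}) * ennreal (measure (U dv) {z. norm z \<in> A (j+k)}))"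
    proof (intro prod.cong refl)
      fix j assume j: "j \<in> {..<k}"
      then have "A j \<in> sets borel" "A (j+k) \<in> sets borel" using A' by auto
      then show "emeasure (U dv) {z. norm z \<in> A (j+k) \<and> bearing z \<in> A j}
          = ennreal (measure (U dv) {z. bearing z \<in> A j}) * ennreal (measure (U dv) {z. norm z \<in> A (j+k)})"
        using U_indep[OF dv] by (simp add: finite_measure.emeasure_eq_measure[OF prob_space.axioms(1)[OF prob_space_U[OF dv]]] ennreal_mult'[symmetric] mult.commute)
    qed
    also have "\<dots> = (\<Prod>i<k. emeasure (Mx dv k i) (A i)) * (\<Prod>i<k. emeasure (Mx dv k (i+k)) (A (i+k)))"
      unfolding prod.distrib
      using A' by (simp add: Mx_def emeasure_Tm[OF dv] emeasure_Rm[OF dv])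
    also have "\<dots> = (\<Prod>i\<in>{..<2*k}. emeasure (Mx dv k i) (A i))"
      by (rule prod_split2[symmetric])
    finally show "emeasure (distr (PiM {..<k} (\<lambda>_. U dv)) (PiM {..<2*k} (Mx dv k)) (W k)) (PiE {..<2*k} A)
        = (\<Prod>i\<in>{..<2*k}. emeasure (Mx dv k i) (A i))" .
  qed simp_all
qed

definition Sset :: "real \<Rightarrow> nat \<Rightarrow> (nat \<Rightarrow> real set) \<Rightarrow> (nat \<Rightarrow> real) set" where
  "Sset dv k A = {y \<in> space (PiM {..<2*k} (Mx dv k)). \<forall>i<k. y (k + sort_key y [0..<k] ! i) \<in> A i}"

lemma Sset_meas:
  assumes A: "\<And>i. A i \<in> sets borel"
  shows "Sset dv k A \<in> sets (PiM {..<2*k} (Mx dv k))"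
proof -
  let ?N = "PiM {..<2*k} (Mx dv k)"
  define f where "f = (\<lambda>(y::nat \<Rightarrow> real) i. if i < k then y i else 0)"
  define Pr where "Pr = (\<lambda>(L::nat list) (y::nat \<Rightarrow> real). \<forall>i<k. L ! i < k \<and> y (k + L ! i) \<in> A i)"
  have fm: "(\<lambda>y. f y i) \<in> borel_measurable ?N" for i
  proof (cases "i < k")
    case True
    then have "(\<lambda>y. y i) \<in> measurable ?N (Mx dv k i)" by (intro measurable_component_singleton) simp
    then have "(\<lambda>y. y i) \<in> borel_measurable ?N" by (subst measurable_cong_sets[OF refl sets_Mx[symmetric]])
    then show ?thesis using True by (simp add: f_def)
  next
    case False then show ?thesis by (simp add: f_def)
  qed
  have sm: "(\<lambda>y. sort_key (f y) [0..<k]) \<in> measurable ?N (count_space UNIV)"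
    by (rule measurable_sort_key[OF fm])
  have pm: "Measurable.pred ?N (Pr L)" for L
  proof (cases "\<forall>i<k. L ! i < k")
    case True
    have "Measurable.pred ?N (\<lambda>y. \<forall>i\<in>{..<k}. y (k + L ! i) \<in> A i)"
    proof (rule pred_intros_countable_bounded(3))
      fix i assume i: "i \<in> {..<k}"
      then have "k + L ! i \<in> {..<2*k}" using True by auto
      then have "(\<lambda>y. y (k + L ! i)) \<in> measurable ?N (Mx dv k (k + L ! i))" by (rule measurable_component_singleton)
      from measurable_sets[OF this, of "A i"] A
      have "(\<lambda>y. y (k + L ! i)) -` A i \<inter> space ?N \<in> sets ?N" by simp
      moreover have "(\<lambda>y. y (k + L ! i)) -` A i \<inter> space ?N = {y \<in> space ?N. y (k + L ! i) \<in> A i}" by blast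
      ultimately show "Measurable.pred ?N (\<lambda>y. y (k + L ! i) \<in> A i)" unfolding pred_def by simp
    qed
    moreover have "Pr L = (\<lambda>y. \<forall>i\<in>{..<k}. y (k + L ! i) \<in> A i)" using True unfolding Pr_def by auto
    ultimately show ?thesis by simp
  next
    case False
    then have "Pr L = (\<lambda>_. False)" unfolding Pr_def by auto
    then show ?thesis by simp
  qed
  have "Measurable.pred ?N (\<lambda>y. Pr (sort_key (f y) [0..<k]) y)"
    by (rule measurable_compose_countable[OF pm sm])
  then have "{y \<in> space ?N. Pr (sort_key (f y) [0..<k]) y} \<in> sets ?N" unfolding pred_def .
  moreover have "{y \<in> space ?N. Pr (sort_key (f y) [0..<k]) y} = Sset dv k A"
  proof -
    have "Pr (sort_key (f y) [0..<k]) y \<longleftrightarrow> (\<forall>i<k. y (k + sort_key y [0..<k] ! i) \<in> A i)" for y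
    proof -
      have e: "sort_key (f y) [0..<k] = sort_key y [0..<k]"
        by (rule sort_key_cong) (simp add: f_def)
      have "\<forall>i<k. sort_key y [0..<k] ! i < k"
        using sort_perm(2,3)[of y k] by (metis lessThan_iff nth_mem)
      then show ?thesis unfolding e Pr_def by auto
    qed
    then show ?thesis unfolding Sset_def by auto
  qed
  ultimately show ?thesis by simp
qed

lemma space_Mx[simp]: "space (Mx dv k i) = UNIV"
  by (simp add: Mx_def Rm_def Tm_def)

lemma bij_add: "bij_betw (\<lambda>j. k + j) {..<k} {k..<2*(k::nat)}"
  unfolding bij_betw_def
proof
  show "inj_on (\<lambda>j. k + j) {..<k}" by (simp add: inj_on_def)
  show "(\<lambda>j. k + j) ` {..<k} = {k..<2*k}"
  proof (auto)
    fix x assume "k \<le> x" "x < 2*k"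
    then show "x \<in> (+) k ` {..<k}" by (intro image_eqI[of _ _ "x - k"]) auto
  qed
qed

lemma slice_measure:
  assumes dv: "dv > 0" and A: "\<And>i. A i \<in> sets borel"
  assumes th: "\<theta> \<in> space (PiM {..<k} (Mx dv k))"
  shows "emeasure (PiM {k..<2*k} (Mx dv k))
           {\<rho> \<in> space (PiM {k..<2*k} (Mx dv k)). merge {..<k} {k..<2*k} (\<theta>, \<rho>) \<in> Sset dv k A}
         = (\<Prod>i<k. emeasure (Rm dv) (A i))"
proof -
  interpret PM: product_prob_space "Mx dv k" "{..<2*k}" using pps_Mx[OF dv] by (simp add: product_prob_space_def)
  let ?I = "{..<k}" and ?J = "{k..<2*k}"
  define \<sigma> where "\<sigma> = sort_key \<theta> [0..<k]"
  define \<tau> where "\<tau> = inv_into {..<k} (\<lambda>i. \<sigma> ! i)"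
  have bs: "bij_betw (\<lambda>i. \<sigma> ! i) {..<k} {..<k}" unfolding \<sigma>_def by (rule sort_perm(4))
  have sk: "\<sigma> ! i < k" if "i < k" for i using bs that by (auto dest: bij_betw_apply)
  have IJ: "?I \<inter> ?J = {}" by auto
  have IJU: "?I \<union> ?J = {..<2*k}" by auto
  have mspace: "merge ?I ?J (\<theta>, \<rho>) \<in> space (PiM {..<2*k} (Mx dv k))" for \<rho>
    by (simp add: space_PiM PiE_iff merge_def extensional_def)
  have msort: "sort_key (merge ?I ?J (\<theta>, \<rho>)) [0..<k] = \<sigma>" for \<rho>
    unfolding \<sigma>_def by (rule sort_key_cong) (simp add: merge_def)
  have mval: "merge ?I ?J (\<theta>, \<rho>) (k + \<sigma> ! i) = \<rho> (k + \<sigma> ! i)" if "i < k" for \<rho> i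
    using sk[OF that] by (simp add: merge_def)
  have T: "{\<rho> \<in> space (PiM ?J (Mx dv k)). merge ?I ?J (\<theta>, \<rho>) \<in> Sset dv k A}
      = PiE ?J (\<lambda>j. A (\<tau> (j - k)))"
  proof (intro set_eqI iffI)
    fix \<rho> assume "\<rho> \<in> {\<rho> \<in> space (PiM ?J (Mx dv k)). merge ?I ?J (\<theta>, \<rho>) \<in> Sset dv k A}"
    then have ext: "\<rho> \<in> extensional ?J" and H: "\<forall>i<k. \<rho> (k + \<sigma> ! i) \<in> A i"
      by (auto simp: space_PiM PiE_iff Sset_def msort mval)
    show "\<rho> \<in> PiE ?J (\<lambda>j. A (\<tau> (j - k)))"
    proof (rule PiE_I)
      fix j assume j: "j \<in> ?J"
      then have jk: "j - k \<in> {..<k}" by auto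
      have ti: "\<tau> (j - k) < k" unfolding \<tau>_def using bs jk
        by (metis bij_betw_imp_surj_on inv_into_into lessThan_iff)
      have "\<sigma> ! (\<tau> (j - k)) = j - k" unfolding \<tau>_def using bs jk
        by (metis bij_betw_imp_surj_on f_inv_into_f)
      then have "k + \<sigma> ! (\<tau> (j - k)) = j" using j by auto
      then show "\<rho> j \<in> A (\<tau> (j - k))" using H ti by metis
    next
      fix j assume "j \<notin> ?J" then show "\<rho> j = undefined" using ext by (auto simp: extensional_def)
    qed
  next
    fix \<rho> assume R: "\<rho> \<in> PiE ?J (\<lambda>j. A (\<tau> (j - k)))"
    have "\<forall>i<k. \<rho> (k + \<sigma> ! i) \<in> A i"
    proof (intro allI impI)
      fix i assume i: "i < k"
      have "k + \<sigma> ! i \<in> ?J" using sk[OF i] by auto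
      from PiE_mem[OF R this] have "\<rho> (k + \<sigma> ! i) \<in> A (\<tau> (k + \<sigma> ! i - k))" .
      moreover have "\<tau> (k + \<sigma> ! i - k) = i" unfolding \<tau>_def using bs i
        by (simp add: bij_betw_def inv_into_f_f)
      ultimately show "\<rho> (k + \<sigma> ! i) \<in> A i" by simp
    qed
    moreover have "\<rho> \<in> space (PiM ?J (Mx dv k))" using R by (auto simp: space_PiM PiE_iff)
    ultimately show "\<rho> \<in> {\<rho> \<in> space (PiM ?J (Mx dv k)). merge ?I ?J (\<theta>, \<rho>) \<in> Sset dv k A}"
      using mspace by (auto simp: Sset_def msort mval)
  qed
  have "emeasure (PiM ?J (Mx dv k)) (PiE ?J (\<lambda>j. A (\<tau> (j - k)))) = (\<Prod>j\<in>?J. emeasure (Mx dv k j) (A (\<tau> (j - k))))"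
    using A by (intro PM.emeasure_PiM) auto
  also have "\<dots> = (\<Prod>j\<in>?J. emeasure (Rm dv) (A (\<tau> (j - k))))"
    by (intro prod.cong refl) (auto simp: Mx_def)
  also have "\<dots> = (\<Prod>i<k. emeasure (Rm dv) (A (\<tau> ((k + \<sigma> ! i) - k))))"
  proof -
    have "bij_betw ((\<lambda>j. k + j) \<circ> (\<lambda>i. \<sigma> ! i)) {..<k} ?J" by (rule bij_betw_trans[OF bs bij_add])
    then have "bij_betw (\<lambda>i. k + \<sigma> ! i) {..<k} ?J" by (simp add: comp_def)
    from prod.reindex_bij_betw[OF this, of "\<lambda>j. emeasure (Rm dv) (A (\<tau> (j - k)))"]
    show ?thesis by simp
  qed
  also have "\<dots> = (\<Prod>i<k. emeasure (Rm dv) (A i))"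
  proof (intro prod.cong refl)
    fix i assume "i \<in> {..<k}"
    then have "\<tau> (k + \<sigma> ! i - k) = i" unfolding \<tau>_def using bs
      by (simp add: bij_betw_def inv_into_f_f)
    then show "emeasure (Rm dv) (A (\<tau> (k + \<sigma> ! i - k))) = emeasure (Rm dv) (A i)" by simp
  qed
  finally show ?thesis unfolding T .
qed

lemma X_eq:
  shows "{x \<in> space (PiM {..<k} (\<lambda>_. U dv)). \<forall>i<k. norm (sort_key bearing (map x [0..<k]) ! i) \<in> A i} = W k -` (Sset dv k A) \<inter> space (PiM {..<k} (\<lambda>_. U dv))"
proof (intro set_eqI)
  fix x
  define \<sigma> where "\<sigma> = sort_key (W k x) [0..<k]"
  have s0: "sort_key (bearing \<circ> x) [0..<k] = \<sigma>"
    unfolding \<sigma>_def by (rule sort_key_cong) (simp add: W_def)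
  have s1: "sort_key bearing (map x [0..<k]) = map x \<sigma>"
    unfolding sort_key_map s0 ..
  have len: "length \<sigma> = k" unfolding \<sigma>_def by simp
  have sk: "\<sigma> ! i < k" if "i < k" for i
    using sort_perm(4)[of "W k x" k] that unfolding \<sigma>_def by (auto dest: bij_betw_apply)
  have wv: "W k x (k + \<sigma> ! i) = norm (x (\<sigma> ! i))" if "i < k" for i
    using sk[OF that] by (simp add: W_def)
  have "x \<in> space (PiM {..<k} (\<lambda>_. U dv)) \<Longrightarrow> W k x \<in> space (PiM {..<2*k} (Mx dv k))" using measurable_space[OF W_meas] by blast
  then show "x \<in> {x \<in> space (PiM {..<k} (\<lambda>_. U dv)). \<forall>i<k. norm (sort_key bearing (map x [0..<k]) ! i) \<in> A i} \<longleftrightarrow> x \<in> W k -` (Sset dv k A) \<inter> space (PiM {..<k} (\<lambda>_. U dv))"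
    unfolding Sset_def using len wv by (auto simp: s1 \<sigma>_def[symmetric])
qed

lemma X_meas:
  assumes A: "\<And>i. A i \<in> sets borel"
  shows "{x \<in> space (PiM {..<k} (\<lambda>_. U dv)). \<forall>i<k. norm (sort_key bearing (map x [0..<k]) ! i) \<in> A i}
     \<in> sets (PiM {..<k} (\<lambda>_. U dv))"
  unfolding X_eq by (rule measurable_sets[OF W_meas Sset_meas[OF A]])

lemma key_emeasure:
  assumes dv: "dv > 0" and A: "\<And>i. A i \<in> sets borel"
  shows "emeasure (PiM {..<k} (\<lambda>_. U dv))
     {x \<in> space (PiM {..<k} (\<lambda>_. U dv)). \<forall>i<k. norm (sort_key bearing (map x [0..<k]) ! i) \<in> A i}
     = (\<Prod>i<k. emeasure (Rm dv) (A i))"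
proof -
  interpret PM: product_prob_space "Mx dv k" "{..<2*k}" using pps_Mx[OF dv] by (simp add: product_prob_space_def)
  let ?Pk = "PiM {..<k} (\<lambda>_. U dv)" and ?N = "PiM {..<2*k} (Mx dv k)"
  let ?I = "{..<k}" and ?J = "{k..<2*k}"
  let ?S = "Sset dv k A"
  have Sm: "?S \<in> sets ?N" by (rule Sset_meas[OF A])
  have X: "{x \<in> space ?Pk. \<forall>i<k. norm (sort_key bearing (map x [0..<k]) ! i) \<in> A i} = W k -` ?S \<inter> space ?Pk"
    by (rule X_eq)
  have "emeasure ?Pk (W k -` ?S \<inter> space ?Pk) = emeasure (distr ?Pk ?N (W k)) ?S"
    using Sm by (intro emeasure_distr[symmetric] W_meas)
  also have "\<dots> = emeasure ?N ?S" by (simp add: distr_W[OF dv])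
  also have "?N = distr (PiM ?I (Mx dv k) \<Otimes>\<^sub>M PiM ?J (Mx dv k)) ?N (merge ?I ?J)"
  proof -
    have "?I \<union> ?J = {..<2*k}" by auto
    moreover have "distr (PiM ?I (Mx dv k) \<Otimes>\<^sub>M PiM ?J (Mx dv k)) (PiM (?I \<union> ?J) (Mx dv k)) (merge ?I ?J) = PiM (?I \<union> ?J) (Mx dv k)"
      by (rule PM.distr_merge) auto
    ultimately show ?thesis by simp
  qed
  also have "emeasure \<dots> ?S = emeasure (PiM ?I (Mx dv k) \<Otimes>\<^sub>M PiM ?J (Mx dv k)) (merge ?I ?J -` ?S \<inter> space (PiM ?I (Mx dv k) \<Otimes>\<^sub>M PiM ?J (Mx dv k)))"
  proof -
    have "merge ?I ?J \<in> measurable (PiM ?I (Mx dv k) \<Otimes>\<^sub>M PiM ?J (Mx dv k)) (PiM (?I \<union> ?J) (Mx dv k))"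
      by (rule measurable_merge)
    moreover have "?I \<union> ?J = {..<2*k}" by auto
    ultimately have "merge ?I ?J \<in> measurable (PiM ?I (Mx dv k) \<Otimes>\<^sub>M PiM ?J (Mx dv k)) ?N" by simp
    then show ?thesis using Sm by (intro emeasure_distr)
  qed
  also have "\<dots> = (\<integral>\<^sup>+\<theta>. emeasure (PiM ?J (Mx dv k)) (Pair \<theta> -` (merge ?I ?J -` ?S \<inter> space (PiM ?I (Mx dv k) \<Otimes>\<^sub>M PiM ?J (Mx dv k)))) \<partial>PiM ?I (Mx dv k))"
  proof -
    have ps: "prob_space (PiM ?J (Mx dv k))" by (rule prob_space_PiM) (simp add: Mx_def prob_space_Rm prob_space_Tm dv)
    interpret SF: sigma_finite_measure "PiM ?J (Mx dv k)" using prob_space_imp_sigma_finite[OF ps] .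
    have "merge ?I ?J -` ?S \<inter> space (PiM ?I (Mx dv k) \<Otimes>\<^sub>M PiM ?J (Mx dv k)) \<in> sets (PiM ?I (Mx dv k) \<Otimes>\<^sub>M PiM ?J (Mx dv k))"
    proof -
      have "merge ?I ?J \<in> measurable (PiM ?I (Mx dv k) \<Otimes>\<^sub>M PiM ?J (Mx dv k)) (PiM (?I \<union> ?J) (Mx dv k))"
        by (rule measurable_merge)
      moreover have "?I \<union> ?J = {..<2*k}" by auto
      ultimately have "merge ?I ?J \<in> measurable (PiM ?I (Mx dv k) \<Otimes>\<^sub>M PiM ?J (Mx dv k)) ?N" by simp
      then show ?thesis using Sm by (rule measurable_sets)
    qed
    then show ?thesis by (rule SF.emeasure_pair_measure_alt)
  qed
  also have "\<dots> = (\<integral>\<^sup>+\<theta>. (\<Prod>i<k. emeasure (Rm dv) (A i)) \<partial>PiM ?I (Mx dv k))"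
  proof (intro nn_integral_cong)
    fix \<theta> assume th: "\<theta> \<in> space (PiM ?I (Mx dv k))"
    have "Pair \<theta> -` (merge ?I ?J -` ?S \<inter> space (PiM ?I (Mx dv k) \<Otimes>\<^sub>M PiM ?J (Mx dv k)))
        = {\<rho> \<in> space (PiM ?J (Mx dv k)). merge ?I ?J (\<theta>, \<rho>) \<in> ?S}"
      using th by (auto simp: space_pair_measure)
    then show "emeasure (PiM ?J (Mx dv k)) (Pair \<theta> -` (merge ?I ?J -` ?S \<inter> space (PiM ?I (Mx dv k) \<Otimes>\<^sub>M PiM ?J (Mx dv k))))
        = (\<Prod>i<k. emeasure (Rm dv) (A i))"
      using slice_measure[OF dv A th] by simp
  qed
  also have "\<dots> = (\<Prod>i<k. emeasure (Rm dv) (A i))"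
  proof -
    have ps: "prob_space (PiM ?I (Mx dv k))" by (rule prob_space_PiM) (simp add: Mx_def prob_space_Rm prob_space_Tm dv)
    then show ?thesis by (simp add: prob_space.emeasure_space_1)
  qed
  finally show ?thesis unfolding X .
qed

lemma key_measure:
  assumes dv: "dv > 0" and A: "\<And>i. A i \<in> sets borel"
  shows "measure (PiM {..<k} (\<lambda>_. U dv))
     {x \<in> space (PiM {..<k} (\<lambda>_. U dv)). \<forall>i<k. norm (sort_key bearing (map x [0..<k]) ! i) \<in> A i}
     = (\<Prod>i<k. measure (U dv) {z. norm z \<in> A i})"
proof -
  have "(\<Prod>i<k. emeasure (Rm dv) (A i)) = (\<Prod>i<k. ennreal (measure (U dv) {z. norm z \<in> A i}))"
    using emeasure_Rm[OF dv A] by simp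
  also have "\<dots> = ennreal (\<Prod>i<k. measure (U dv) {z. norm z \<in> A i})"
    by (rule prod_ennreal) simp
  finally show ?thesis unfolding measure_def key_emeasure[OF dv A] by (simp add: prod_nonneg)
qed

lemma landmark_eq: "landmark_space lam dv = measure_pmf (poisson_pmf (lam * pi * dv\<^sup>2)) \<Otimes>\<^sub>M PiM UNIV (\<lambda>_. U dv)"
  by (simp add: landmark_space_def U_def)

lemma event_measure:
  assumes dv: "dv > 0" and A: "\<And>i. A i \<in> sets borel"
  shows "measure (measure_pmf p \<Otimes>\<^sub>M PiM UNIV (\<lambda>_. U dv))
     {\<omega> \<in> space (measure_pmf p \<Otimes>\<^sub>M PiM UNIV (\<lambda>_. U dv)). fst \<omega> = k \<and>
        (\<forall>i<k. norm (sort_key bearing (map (snd \<omega>) [0..<k]) ! i) \<in> A i)}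
     = pmf p k * (\<Prod>i<k. measure (U dv) {z. norm z \<in> A i})"
proof -
  interpret PU: product_prob_space "\<lambda>_. U dv" UNIV using pps_U[OF dv] by (simp add: product_prob_space_def)
  let ?P = "PiM (UNIV::nat set) (\<lambda>_. U dv)"
  let ?Pk = "PiM {..<k} (\<lambda>_. U dv)"
  let ?X = "{x \<in> space ?Pk. \<forall>i<k. norm (sort_key bearing (map x [0..<k]) ! i) \<in> A i}"
  have Xm: "?X \<in> sets ?Pk" by (rule X_meas[OF A])
  have ps1: "prob_space ?P" by (rule prob_space_PiM) (simp add: prob_space_U dv)
  have eq: "{\<omega> \<in> space (measure_pmf p \<Otimes>\<^sub>M ?P). fst \<omega> = k \<and>
        (\<forall>i<k. norm (sort_key bearing (map (snd \<omega>) [0..<k]) ! i) \<in> A i)}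
      = {k} \<times> prod_emb UNIV (\<lambda>_. U dv) {..<k} ?X"
  proof -
    have m: "map (restrict x {..<k}) [0..<k] = map x [0..<k]" for x :: "nat \<Rightarrow> complex"
      by (intro map_cong) auto
    have r: "restrict x {..<k} \<in> space ?Pk" for x :: "nat \<Rightarrow> complex"
      by (simp add: space_PiM)
    show ?thesis
      by (auto simp: space_pair_measure prod_emb_def m r space_PiM)
  qed
  have "emeasure (measure_pmf p \<Otimes>\<^sub>M ?P) ({k} \<times> prod_emb UNIV (\<lambda>_. U dv) {..<k} ?X)
      = emeasure (measure_pmf p) {k} * emeasure ?P (prod_emb UNIV (\<lambda>_. U dv) {..<k} ?X)"
    by (intro sigma_finite_measure.emeasure_pair_measure_Times[OF prob_space_imp_sigma_finite[OF ps1]]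
        measurable_prod_emb[OF subset_UNIV Xm]) simp
  also have "emeasure ?P (prod_emb UNIV (\<lambda>_. U dv) {..<k} ?X) = emeasure ?Pk ?X"
    by (rule PU.emeasure_PiM_emb'[OF subset_UNIV finite_lessThan Xm])
  finally have "measure (measure_pmf p \<Otimes>\<^sub>M ?P) ({k} \<times> prod_emb UNIV (\<lambda>_. U dv) {..<k} ?X)
      = measure (measure_pmf p) {k} * measure ?Pk ?X"
    unfolding measure_def by (simp add: enn2real_mult)
  then show ?thesis unfolding eq by (simp add: measure_pmf_single key_measure[OF dv A])
qed

lemma measure_U_UNIV: "dv > 0 \<Longrightarrow> measure (U dv) UNIV = 1"
  using prob_space.prob_space[OF prob_space_U] by simp

lemma measure_U_norm_UNIV: "dv > 0 \<Longrightarrow> measure (U dv) {z. norm z \<in> UNIV} = 1"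
  using prob_space.prob_space[OF prob_space_U] by simp

theorem lemma4:
  fixes lam dv eps :: real and k :: nat and r :: "real list"
  assumes "lam > 0" and "dv > 0" and "eps \<ge> 0" and "length r = k"
  defines "m \<equiv> lam * pi * dv\<^sup>2"
  defines "M \<equiv> landmark_space lam dv"
  shows "1 - measure M {\<omega> \<in> space M. delta_p (range_vector \<omega>) r \<le> ereal eps}
       = 1 - m ^ k / fact k * exp (- m) *
           (\<Prod>i<k. measure M {\<omega> \<in> space M. num_visible \<omega> = k \<and>
                                     \<bar>range_vector \<omega> ! i - r ! i\<bar> \<le> eps}
                    / measure M {\<omega> \<in> space M. num_visible \<omega> = k})"
proof -
  have lam: "lam > 0" and dv: "dv > 0" and eps: "eps \<ge> 0" and lr: "length r = k" using assms by auto
  have mpos: "m > 0" unfolding m_def using lam dv by simp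
  have Meq: "M = measure_pmf (poisson_pmf m) \<Otimes>\<^sub>M PiM UNIV (\<lambda>_. U dv)"
    unfolding M_def m_def by (rule landmark_eq)
  define pk where "pk = m ^ k / fact k * exp (- m)"
  have pk: "pmf (poisson_pmf m) k = pk" unfolding pk_def using mpos by simp
  have pkpos: "pk > 0" unfolding pk_def using mpos by simp
  define E where "E = (\<lambda>A. {\<omega> \<in> space M. fst \<omega> = k \<and>
        (\<forall>i<k. norm (sort_key bearing (map (snd \<omega>) [0..<k]) ! i) \<in> A i)})"
  have Emeas: "measure M (E A) = pk * (\<Prod>i<k. measure (U dv) {z. norm z \<in> A i})"
    if A: "\<And>i. A i \<in> sets borel" for A
    unfolding E_def Meq using event_measure[OF dv A, of "poisson_pmf m" k] pk by simp
  define A where "A = (\<lambda>i. {t::real. \<bar>t - r ! i\<bar> \<le> eps})"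
  have Am: "A i \<in> sets borel" for i unfolding A_def by measurable
  define q where "q = (\<lambda>i. measure (U dv) {z. norm z \<in> A i})"
  have rv: "range_vector \<omega> ! i = norm (sort_key bearing (map (snd \<omega>) [0..<fst \<omega>]) ! i)"
    if "i < fst \<omega>" for \<omega> i using that by (simp add: range_vector_def)
  have lrv: "length (range_vector \<omega>) = fst \<omega>" for \<omega> by (simp add: range_vector_def)
  have e1: "{\<omega> \<in> space M. delta_p (range_vector \<omega>) r \<le> ereal eps} = E A"
  proof -
    have "delta_p (range_vector \<omega>) r \<le> ereal eps \<longleftrightarrow> fst \<omega> = k \<and>
        (\<forall>i<k. norm (sort_key bearing (map (snd \<omega>) [0..<k]) ! i) \<in> A i)" for \<omega>
    proof (cases "fst \<omega> = k")
      case False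
      then show ?thesis unfolding delta_p_def using lrv[of \<omega>] lr by simp
    next
      case True
      have fin: "finite {\<bar>range_vector \<omega> ! i - r ! i\<bar> | i. i < length (range_vector \<omega>)}" by simp
      have "delta_p (range_vector \<omega>) r \<le> ereal eps \<longleftrightarrow>
          Max (insert 0 {\<bar>range_vector \<omega> ! i - r ! i\<bar> | i. i < length (range_vector \<omega>)}) \<le> eps"
        unfolding delta_p_def using lrv[of \<omega>] lr True by simp
      also have "\<dots> \<longleftrightarrow> (\<forall>i<k. \<bar>range_vector \<omega> ! i - r ! i\<bar> \<le> eps)"
        using fin eps lrv[of \<omega>] True by auto
      also have "\<dots> \<longleftrightarrow> (\<forall>i<k. norm (sort_key bearing (map (snd \<omega>) [0..<k]) ! i) \<in> A i)"
        using rv True by (auto simp: A_def)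
      finally show ?thesis using True by simp
    qed
    then show ?thesis unfolding E_def by simp
  qed
  have e2: "{\<omega> \<in> space M. num_visible \<omega> = k \<and> \<bar>range_vector \<omega> ! i - r ! i\<bar> \<le> eps}
      = E (\<lambda>j. if j = i then A i else UNIV)" if i: "i < k" for i
    unfolding E_def num_visible_def using i rv by (auto simp: A_def)
  have e3: "{\<omega> \<in> space M. num_visible \<omega> = k} = E (\<lambda>_. UNIV)"
    unfolding E_def num_visible_def by auto
  have m3: "measure M {\<omega> \<in> space M. num_visible \<omega> = k} = pk"
    unfolding e3 using Emeas[of "\<lambda>_. UNIV"] measure_U_norm_UNIV[OF dv] by simp
  have m2: "measure M {\<omega> \<in> space M. num_visible \<omega> = k \<and> \<bar>range_vector \<omega> ! i - r ! i\<bar> \<le> eps} = pk * q i"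
    if i: "i < k" for i
  proof -
    have "measure M (E (\<lambda>j. if j = i then A i else UNIV))
        = pk * (\<Prod>j<k. measure (U dv) {z. norm z \<in> (if j = i then A i else UNIV)})"
      by (rule Emeas) (simp add: Am)
    also have "(\<Prod>j<k. measure (U dv) {z. norm z \<in> (if j = i then A i else UNIV)}) = (\<Prod>j<k. if j = i then q i else 1)"
      by (intro prod.cong refl) (simp add: q_def measure_U_norm_UNIV[OF dv] measure_U_UNIV[OF dv])
    also have "\<dots> = q i" using i by (simp add: prod.delta)
    finally show ?thesis unfolding e2[OF i] .
  qed
  have "(\<Prod>i<k. measure M {\<omega> \<in> space M. num_visible \<omega> = k \<and> \<bar>range_vector \<omega> ! i - r ! i\<bar> \<le> eps}
                    / measure M {\<omega> \<in> space M. num_visible \<omega> = k}) = (\<Prod>i<k. q i)"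
    using pkpos by (intro prod.cong refl) (simp add: m2 m3)
  moreover have "measure M {\<omega> \<in> space M. delta_p (range_vector \<omega>) r \<le> ereal eps} = pk * (\<Prod>i<k. q i)"
    unfolding e1 q_def by (rule Emeas[OF Am])
  ultimately show ?thesis by (simp add: pk_def)
qed

end
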